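(* Let $h:\mathbf{C}\to\mathbf{C}$ be a transitive homeomorphism of the Cantor space and let $x\in\mathbf{C}$ be a point whose orbit under $h$ is dense in $\mathbf{C}$. Then there exist $\Phi=(\varphi^L,\varphi^U)$ such that $\mathbf{F}_\Phi$ is a Lelek fence and a homeomorphism $\hat h$ of $\mathbf{F}_\Phi$ such that (a) $h$ is the canonical factor of $\hat h$, i.e. $\hat h(y,t)=(h(y),s)$ for some $s$, for all $(y,t)\in\mathbf{F}_\Phi$; and (b) $(x,\varphi^U(x))$ is a transitive point of $\hat h$ (its orbit under $\hat h$ is dense in $\mathbf{F}_\Phi$).
   Context: For $\Phi=(\varphi^L,\varphi^U)$ with $\varphi^L,\varphi^U:\mathbf{C}\to[0,1]$, $\varphi^L$ lower semicontinuous, $\varphi^U$ upper semicontinuous, $\varphi^L\le\varphi^U$, the fence is $\mathbf{F}_\Phi=\{(x,t)\in\mathbf{C}\times[0,1]:\varphi^L(x)\le t\le\varphi^U(x)\}$. $\mathbf{F}_\Phi$ is a Lelek fence if $\varphi^L\equiv0$, $\varphi^U$ is positive on a dense subset of $\mathbf{C}$, and the graph $\{(x,\varphi^U(x)):x\in\mathbf{C}\}$ is dense in $\mathbf{F}_\Phi$. *)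

theory Defs
  imports "HOL-Analysis.Analysis"
begin

text \<open>The Cantor space, realised as the middle-thirds Cantor set in the reals
  (with the subspace topology).\<close>
definition cantor_set :: "real set" where
  "cantor_set = {x. \<exists>d::nat \<Rightarrow> nat. (\<forall>n. d n \<in> {0, 2}) \<and>
                     x = (\<Sum>n. real (d n) / 3 ^ (n + 1))}"

definition lsc_on :: "real set \<Rightarrow> (real \<Rightarrow> real) \<Rightarrow> bool" where
  "lsc_on S f \<longleftrightarrow> (\<forall>a. openin (top_of_set S) {x \<in> S. a < f x})"

definition usc_on :: "real set \<Rightarrow> (real \<Rightarrow> real) \<Rightarrow> bool" where
  "usc_on S f \<longleftrightarrow> (\<forall>a. openin (top_of_set S) {x \<in> S. f x < a})"

definition admissible_pair :: "(real \<Rightarrow> real) \<Rightarrow> (real \<Rightarrow> real) \<Rightarrow> bool" where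
  "admissible_pair phiL phiU \<longleftrightarrow>
     (\<forall>x\<in>cantor_set. phiL x \<in> {0..1} \<and> phiU x \<in> {0..1} \<and> phiL x \<le> phiU x) \<and>
     lsc_on cantor_set phiL \<and> usc_on cantor_set phiU"

definition fence :: "(real \<Rightarrow> real) \<Rightarrow> (real \<Rightarrow> real) \<Rightarrow> (real \<times> real) set" where
  "fence phiL phiU = {(x, t). x \<in> cantor_set \<and> t \<in> {0..1} \<and> phiL x \<le> t \<and> t \<le> phiU x}"

definition lelek_fence :: "(real \<Rightarrow> real) \<Rightarrow> (real \<Rightarrow> real) \<Rightarrow> bool" where
  "lelek_fence phiL phiU \<longleftrightarrow>
     (\<forall>x\<in>cantor_set. phiL x = 0) \<and>
     (\<exists>D \<subseteq> cantor_set. cantor_set \<subseteq> closure D \<and> (\<forall>x\<in>D. 0 < phiU x)) \<and>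
     fence phiL phiU \<subseteq> closure ((\<lambda>x. (x, phiU x)) ` cantor_set)"

definition orbit :: "('a \<Rightarrow> 'a) \<Rightarrow> 'a \<Rightarrow> 'a set" where
  "orbit f x = range (\<lambda>n. (f ^^ n) x)"

definition top_transitive :: "'a::topological_space set \<Rightarrow> ('a \<Rightarrow> 'a) \<Rightarrow> bool" where
  "top_transitive S f \<longleftrightarrow>
     (\<forall>U V. openin (top_of_set S) U \<and> openin (top_of_set S) V \<and> U \<noteq> {} \<and> V \<noteq> {} \<longrightarrow>
        (\<exists>n>0. (f ^^ n) ` U \<inter> V \<noteq> {}))"

end

theory Submission
  imports Defs
begin

lemma cantor_summable:
  assumes "\<forall>n. d n \<in> {0::nat, 2}"
  shows "summable (\<lambda>n. real (d n) / 3 ^ (n + 1))"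
proof (rule summable_comparison_test[where g = "\<lambda>n. 2 * (1/3) ^ n"])
  show "\<exists>N. \<forall>n\<ge>N. norm (real (d n) / 3 ^ (n + 1)) \<le> 2 * (1 / 3) ^ n"
  proof (intro exI allI impI)
    fix n :: nat
    have "real (d n) \<le> 2" using assms[rule_format, of n] by auto
    then have "real (d n) / 3 ^ (n+1) \<le> 2 / 3 ^ (n+1)"
      by (simp add: divide_right_mono)
    also have "\<dots> \<le> 2 * (1/3)^n" by (simp add: power_divide frac_le)
    finally show "norm (real (d n) / 3 ^ (n + 1)) \<le> 2 * (1 / 3) ^ n" by simp
  qed
  show "summable (\<lambda>n. 2 * (1 / 3 :: real) ^ n)"
    by (intro summable_mult summable_geometric) simp
qed

lemma cantor_bounded: "cantor_set \<subseteq> {0..3}"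
proof
  fix z assume "z \<in> cantor_set"
  then obtain d where d: "\<forall>n. d n \<in> {0::nat, 2}" and z: "z = (\<Sum>n. real (d n) / 3 ^ (n + 1))"
    unfolding cantor_set_def by blast
  have s: "summable (\<lambda>n. real (d n) / 3 ^ (n + 1))" using cantor_summable[OF d] .
  have g: "summable (\<lambda>n. 2 * (1 / 3 :: real) ^ n)"
    by (intro summable_mult summable_geometric) simp
  have "z \<ge> 0" unfolding z by (intro suminf_nonneg s) simp
  moreover have "z \<le> (\<Sum>n. 2 * (1 / 3 :: real) ^ n)"
    unfolding z
  proof (rule suminf_le[OF _ s g])
    fix n
    have "real (d n) \<le> 2" using d[rule_format, of n] by auto
    then have "real (d n) / 3 ^ (n+1) \<le> 2 / 3 ^ (n+1)"
      by (simp add: divide_right_mono)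
    also have "\<dots> \<le> 2 * (1/3)^n" by (simp add: power_divide frac_le)
    finally show "real (d n) / 3 ^ (n + 1) \<le> 2 * (1 / 3) ^ n" .
  qed
  moreover have "(\<Sum>n. 2 * (1 / 3 :: real) ^ n) = 3"
    using suminf_geometric[of "1/3::real"] by (subst suminf_mult) (simp_all add: summable_geometric)
  ultimately show "z \<in> {0..3}" by simp
qed

lemma cantor_infinite: "infinite cantor_set"
proof -
  define p where "p n = (2::real) / 3 ^ (n + 1)" for n :: nat
  have "p n \<in> cantor_set" for n
  proof -
    define d where "d i = (if i = n then 2 else 0::nat)" for i
    have "(\<lambda>i. real (d i) / 3 ^ (i + 1)) = (\<lambda>i. if i = n then real (d i) / 3 ^ (i + 1) else 0)"
      by (auto simp: d_def)
    then have "(\<Sum>i. real (d i) / 3 ^ (i + 1)) = real (d n) / 3 ^ (n + 1)"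
      using sums_single[of n "\<lambda>i. real (d i) / 3 ^ (i + 1)"] sums_unique by metis
    then show ?thesis unfolding cantor_set_def p_def
      by (intro CollectI exI[of _ d]) (auto simp: d_def)
  qed
  moreover have "inj p"
    unfolding inj_def p_def by (auto dest: power_inject_exp[THEN iffD1, rotated])
  ultimately show ?thesis
    by (metis infinite_UNIV_nat finite_imageD range_subsetD subsetI finite_subset image_subsetI)
qed

datatype stage = Stage (sc: real) (sP: "real set") (sd: real) (sm: nat)

definition beta :: "real set \<Rightarrow> real \<Rightarrow> real \<Rightarrow> real" where
  "beta P \<delta> z = max 0 (1 - infdist z P / \<delta>)"

definition Dk :: "nat \<Rightarrow> real" where
  "Dk k = real (fst (prod_decode k)) / real (Suc (snd (prod_decode k)))"
definition ek :: "nat \<Rightarrow> real" where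
  "ek k = 1 / real (Suc (snd (prod_decode k)))"

lemma Dk_nonneg: "Dk k \<ge> 0" by (simp add: Dk_def)
lemma ek_pos: "ek k > 0" by (simp add: ek_def)

lemma beta_nonneg: "beta P \<delta> z \<ge> 0" by (simp add: beta_def)
lemma beta_le1: "\<delta> > 0 \<Longrightarrow> beta P \<delta> z \<le> 1"
  by (simp add: beta_def infdist_nonneg)
lemma cont_beta: "continuous_on A (beta P \<delta>)"
  unfolding beta_def divide_inverse by (intro continuous_intros)
lemma beta_in: "p \<in> P \<Longrightarrow> \<delta> > 0 \<Longrightarrow> beta P \<delta> p = 1"
  by (simp add: beta_def)
lemma beta_out:
  assumes "P \<noteq> {}" "\<delta> > 0" "\<And>p. p \<in> P \<Longrightarrow> \<delta> \<le> dist q p"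
  shows "beta P \<delta> q = 0"
proof -
  have "\<delta> \<le> infdist q P"
    unfolding infdist_def using assms by (auto intro: cINF_greatest)
  then have "infdist q P / \<delta> \<ge> 1" using assms by simp
  then show ?thesis by (simp add: beta_def)
qed

lemma finite_sep:
  fixes Q :: "real set"
  assumes "finite Q"
  shows "\<exists>\<delta>>0. \<forall>q\<in>Q. \<forall>q'\<in>Q. q \<noteq> q' \<longrightarrow> \<delta> \<le> dist q q'"
  using assms
proof (induction Q rule: finite_induct)
  case empty then show ?case by (intro exI[of _ 1]) auto
next
  case (insert a Q)
  obtain \<delta> where d: "\<delta> > 0" "\<forall>q\<in>Q. \<forall>q'\<in>Q. q \<noteq> q' \<longrightarrow> \<delta> \<le> dist q q'"
    using insert by blast
  obtain \<delta>a where da: "\<delta>a > 0" "\<forall>q\<in>Q. q \<noteq> a \<longrightarrow> \<delta>a \<le> dist a q"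
    using finite_set_avoid[OF insert(1), of a] by blast
  show ?case
    using d da by (intro exI[of _ "min \<delta> \<delta>a"]) (auto simp: dist_commute min_le_iff_disj)
qed

lemma exp_lip:
  fixes a b :: real
  assumes "0 \<le> a" "0 \<le> b"
  shows "\<bar>exp (- a) - exp (- b)\<bar> \<le> \<bar>a - b\<bar>"
proof -
  have key: "exp (- v) - exp (- u) \<le> u - v" if "0 \<le> v" "v \<le> u" for u v :: real
  proof -
    have "exp (- u) = exp (- v) * exp (- (u - v))" by (simp add: exp_add[symmetric])
    then have "exp (- v) - exp (- u) = exp (- v) * (1 - exp (- (u - v)))" by (simp add: algebra_simps)
    also have "\<dots> \<le> 1 * (1 - exp (- (u - v)))"
    proof (rule mult_right_mono)
      show "exp (- v) \<le> 1" using that by simp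
      show "0 \<le> 1 - exp (- (u - v))" using that by simp
    qed
    also have "\<dots> \<le> u - v"
    proof -
      have e: "1 + (v - u) \<le> exp (v - u)" by (rule exp_ge_add_one_self)
      have "1 * (1 - exp (- (u - v))) = 1 - exp (v - u)" by simp
      then show ?thesis using e by linarith
    qed
    finally show ?thesis .
  qed
  show ?thesis
  proof (cases "b \<le> a")
    case True
    then have "exp (- a) \<le> exp (- b)" by simp
    then show ?thesis using key[of b a] assms True by simp
  next
    case False
    then have "exp (- b) \<le> exp (- a)" by simp
    then show ?thesis using key[of a b] assms False by simp
  qed
qed

lemma dist_pair_le: "dist (a, b) (c, d) \<le> dist a c + dist (b::real) d" for a c :: real
  unfolding dist_Pair_Pair using sqrt_sum_squares_le_sum_abs[of "dist a c" "dist b d"] by simp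

locale sys =
  fixes h g :: "real \<Rightarrow> real" and x :: real
  assumes hom: "homeomorphism cantor_set cantor_set h g"
    and trans: "top_transitive cantor_set h"
    and xC: "x \<in> cantor_set"
    and dense: "cantor_set \<subseteq> closure (orbit h x)"
begin

definition xs :: "nat \<Rightarrow> real" where "xs n = (h ^^ n) x"
definition bs :: "nat \<Rightarrow> real" where "bs n = (g ^^ n) x"

lemma hC: "z \<in> cantor_set \<Longrightarrow> h z \<in> cantor_set"
  using hom unfolding homeomorphism_def by blast
lemma gC: "z \<in> cantor_set \<Longrightarrow> g z \<in> cantor_set"
  using hom unfolding homeomorphism_def by blast
lemma g_h: "z \<in> cantor_set \<Longrightarrow> g (h z) = z"
  using hom unfolding homeomorphism_def by blast
lemma h_g: "z \<in> cantor_set \<Longrightarrow> h (g z) = z"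
  using hom unfolding homeomorphism_def by blast
lemma cont_h: "continuous_on cantor_set h"
  using hom unfolding homeomorphism_def by blast
lemma cont_g: "continuous_on cantor_set g"
  using hom unfolding homeomorphism_def by blast

lemma gpow_C: "z \<in> cantor_set \<Longrightarrow> (g ^^ t) z \<in> cantor_set"
  by (induction t) (auto intro: gC)
lemma hpow_C: "z \<in> cantor_set \<Longrightarrow> (h ^^ t) z \<in> cantor_set"
  by (induction t) (auto intro: hC)

lemma cont_gpow: "continuous_on cantor_set (g ^^ t)"
proof (induction t)
  case 0 then show ?case by (simp add: continuous_on_id)
next
  case (Suc t)
  have "continuous_on cantor_set (g \<circ> (g ^^ t))"
    by (rule continuous_on_compose[OF Suc]) (rule continuous_on_subset[OF cont_g], auto intro: gpow_C)
  then show ?case by simp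
qed

lemma xs_C: "xs n \<in> cantor_set" unfolding xs_def by (rule hpow_C[OF xC])
lemma bs_C: "bs n \<in> cantor_set" unfolding bs_def by (rule gpow_C[OF xC])
lemma xs_Suc: "xs (Suc n) = h (xs n)" unfolding xs_def by simp
lemma xs_0: "xs 0 = x" unfolding xs_def by simp

lemma gpow_xs: "(g ^^ t) (xs n) = (if t \<le> n then xs (n - t) else bs (t - n))"
proof (induction t)
  case 0 then show ?case by simp
next
  case (Suc t)
  show ?case
  proof (cases "Suc t \<le> n")
    case True
    then have "xs (n - t) = h (xs (n - Suc t))"
      by (metis Suc_diff_Suc Suc_le_lessD xs_Suc)
    then show ?thesis using Suc True by (simp add: g_h xs_C)
  next
    case False
    show ?thesis
    proof (cases "t = n")
      case True
      then show ?thesis using Suc by (simp add: xs_0 bs_def)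
    next
      case False
      then have "Suc t - n = Suc (t - n)" using \<open>\<not> Suc t \<le> n\<close> by simp
      then show ?thesis using Suc False \<open>\<not> Suc t \<le> n\<close> by (simp add: bs_def)
    qed
  qed
qed

lemma hpow_bs: "(h ^^ s) (bs s) = x"
proof (induction s)
  case 0 then show ?case by (simp add: bs_def)
next
  case (Suc s)
  have "(h ^^ Suc s) (bs (Suc s)) = (h ^^ s) (h (g (bs s)))"
    by (simp add: bs_def funpow_swap1)
  also have "\<dots> = x" using Suc by (simp add: h_g bs_C)
  finally show ?case .
qed

lemma xs_add: "xs (m + n) = (h ^^ m) (xs n)"
  unfolding xs_def by (simp add: funpow_add)

lemma orbit_eq: "orbit h x = range xs"
  unfolding orbit_def xs_def by simp

lemma not_periodic: "p > 0 \<Longrightarrow> xs p \<noteq> x"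
proof
  assume p: "p > 0" and per: "xs p = x"
  have per2: "xs (q * p + r) = xs r" for q r
  proof (induction q)
    case 0 then show ?case by simp
  next
    case (Suc q)
    have "xs (Suc q * p + r) = (h ^^ (q * p + r)) (xs p)"
      using xs_add[of "q * p + r" p] by (simp add: algebra_simps)
    also have "\<dots> = xs (q * p + r)" using per xs_add[of "q*p+r" 0] by (simp add: xs_0)
    finally show ?case using Suc by simp
  qed
  have "range xs \<subseteq> xs ` {..<p}"
  proof
    fix z assume "z \<in> range xs"
    then obtain n where n: "z = xs n" by blast
    have "n = (n div p) * p + n mod p" by simp
    then have "xs n = xs (n mod p)" using per2 by metis
    then show "z \<in> xs ` {..<p}" using n p by auto
  qed
  then have "finite (range xs)" using finite_subset by blast
  then have "closure (range xs) = range xs" by (simp add: finite_imp_closed)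
  then have "cantor_set \<subseteq> range xs" using dense orbit_eq by simp
  then show False using cantor_infinite \<open>finite (range xs)\<close> finite_subset by blast
qed

lemma inj_xs: "inj xs"
proof (rule injI)
  fix i j assume e: "xs i = xs j"
  show "i = j"
  proof (rule ccontr)
    assume "i \<noteq> j"
    then consider "i < j" | "j < i" by arith
    then show False
    proof cases
      case 1
      have "(g ^^ i) (xs j) = xs (j - i)" "(g ^^ i) (xs i) = xs 0" using 1 by (simp_all add: gpow_xs)
      then have "xs (j - i) = x" using e by (simp add: xs_0)
      then show False using not_periodic[of "j - i"] 1 by simp
    next
      case 2
      have "(g ^^ j) (xs i) = xs (i - j)" "(g ^^ j) (xs j) = xs 0" using 2 by (simp_all add: gpow_xs)
      then have "xs (i - j) = x" using e by (simp add: xs_0)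
      then show False using not_periodic[of "i - j"] 2 by simp
    qed
  qed
qed

lemma bs_ne_xs: "s \<ge> 1 \<Longrightarrow> bs s \<noteq> xs i"
proof
  assume s: "s \<ge> 1" and e: "bs s = xs i"
  have "xs (s + i) = (h ^^ s) (xs i)" by (rule xs_add)
  also have "\<dots> = x" by (metis e hpow_bs)
  finally show False using not_periodic[of "s + i"] s by simp
qed

lemma returns:
  assumes "e > 0"
  shows "\<exists>m>N. dist (xs m) x < e"
proof (rule ccontr)
  assume "\<not> ?thesis"
  then have far: "\<And>m. m > N \<Longrightarrow> dist (xs m) x \<ge> e" by (meson not_less)
  define F where "F = xs ` {..N}"
  have finF: "finite F" unfolding F_def by simp
  have sub: "cantor_set \<inter> ball x e \<subseteq> F"
  proof
    fix z assume z: "z \<in> cantor_set \<inter> ball x e"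
    show "z \<in> F"
    proof (rule ccontr)
      assume zF: "z \<notin> F"
      have "z \<in> closure (range xs)" using z dense orbit_eq by auto
      moreover have "range xs = F \<union> xs ` {N<..}"
      proof -
        have "{..N} \<union> {N<..} = (UNIV::nat set)" by auto
        then show ?thesis unfolding F_def by (metis image_Un)
      qed
      ultimately have zc: "z \<in> closure (xs ` {N<..})"
        using zF finF by (simp add: closure_Un finite_imp_closed)
      have op: "open (ball x e - F)" using finF by (simp add: finite_imp_closed open_Diff)
      have "z \<in> ball x e - F" using z zF by auto
      then have "(ball x e - F) \<inter> closure (xs ` {N<..}) \<noteq> {}" using zc by blast
      then have "(ball x e - F) \<inter> xs ` {N<..} \<noteq> {}"
        using open_Int_closure_eq_empty[OF op] by simp
      then obtain m where "m > N" "xs m \<in> ball x e" by auto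
      then show False using far[of m] by (simp add: dist_commute)
    qed
  qed
  define U where "U = ball x e - (F - {x})"
  have "open U" unfolding U_def using finF by (simp add: finite_imp_closed open_Diff)
  have "cantor_set \<inter> U = {x}"
  proof
    show "cantor_set \<inter> U \<subseteq> {x}" using sub unfolding U_def by blast
    show "{x} \<subseteq> cantor_set \<inter> U" using xC assms unfolding U_def by simp
  qed
  then have op: "openin (top_of_set cantor_set) {x}"
    unfolding openin_open using \<open>open U\<close> by (intro exI[of _ U]) auto
  obtain n where "n > 0" "(h ^^ n) ` {x} \<inter> {x} \<noteq> {}"
    using trans[unfolded top_transitive_def, rule_format, of "{x}" "{x}"] op by auto
  then have "xs n = x" unfolding xs_def by auto
  then show False using not_periodic \<open>n > 0\<close> by blast
qed


definition W :: "stage \<Rightarrow> real \<Rightarrow> real" where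
  "W d z = (\<Sum>t\<in>{1..sm d}. beta (sP d) (sd d) ((g ^^ t) z))"

definition trm :: "stage \<Rightarrow> real \<Rightarrow> real" where
  "trm d z = sc d * (beta (sP d) (sd d) z - beta (sP d) (sd d) ((g ^^ sm d) z))"

definition ok :: "nat \<Rightarrow> nat \<Rightarrow> (real \<Rightarrow> real) \<Rightarrow> stage \<Rightarrow> bool" where
  "ok k M F d \<longleftrightarrow> 0 \<le> sc d \<and> sc d \<le> (1/2)^k \<and> 0 < sd d \<and> M < sm d \<and>
     dist (xs (sm d)) x < ek k \<and> \<bar>F (xs (sm d))\<bar> < ek k \<and> sc d * W d (xs (sm d)) = Dk k \<and>
     W d x = 0 \<and> (\<forall>i\<le>M. W d (xs i) = 0)"

lemma W_nonneg: "W d z \<ge> 0"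
  unfolding W_def by (intro sum_nonneg beta_nonneg)

lemma cont_W: "continuous_on cantor_set (W d)"
  unfolding W_def
proof (intro continuous_on_sum)
  fix t
  show "continuous_on cantor_set (\<lambda>z. beta (sP d) (sd d) ((g ^^ t) z))"
    using continuous_on_compose[OF cont_gpow[of t] cont_beta[of "(g ^^ t) ` cantor_set"]]
    by (simp add: o_def)
qed

lemma cont_trm: "continuous_on cantor_set (trm d)"
  unfolding trm_def
  using continuous_on_compose[OF cont_gpow[of "sm d"] cont_beta[of "(g ^^ sm d) ` cantor_set"]]
  by (intro continuous_intros cont_beta) (simp add: o_def)

lemma trm_bound: "0 \<le> sc d \<Longrightarrow> 0 < sd d \<Longrightarrow> \<bar>trm d z\<bar> \<le> sc d"
proof -
  assume a: "0 \<le> sc d" "0 < sd d"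
  let ?b = "beta (sP d) (sd d)"
  have "0 \<le> ?b z" "?b z \<le> 1" "0 \<le> ?b ((g ^^ sm d) z)" "?b ((g ^^ sm d) z) \<le> 1"
    using beta_nonneg beta_le1[OF a(2)] by auto
  then have "\<bar>?b z - ?b ((g ^^ sm d) z)\<bar> \<le> 1" by (simp add: abs_le_iff)
  then show ?thesis unfolding trm_def using a by (simp add: abs_mult mult_left_le)
qed

lemma trm_eq:
  assumes z: "z \<in> cantor_set"
  shows "trm d z = sc d * (W d (h z) - W d z)"
proof -
  let ?b = "beta (sP d) (sd d)"
  have A: "W d (h z) = (\<Sum>t<sm d. ?b ((g ^^ t) z))"
  proof -
    have "W d (h z) = (\<Sum>t\<in>{1..sm d}. ?b ((g ^^ (t - 1)) z))"
      unfolding W_def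
    proof (intro sum.cong refl)
      fix t assume "t \<in> {1..sm d}"
      then have "t = Suc (t - 1)" by simp
      then have "(g ^^ t) (h z) = (g ^^ (t - 1)) (g (h z))"
        by (metis funpow_Suc_right o_apply)
      then show "?b ((g ^^ t) (h z)) = ?b ((g ^^ (t - 1)) z)" using g_h[OF z] by simp
    qed
    also have "\<dots> = (\<Sum>t<sm d. ?b ((g ^^ t) z))"
      by (rule sum.reindex_bij_witness[where i = "\<lambda>t. t + 1" and j = "\<lambda>t. t - 1"]) auto
    finally show ?thesis .
  qed
  have B: "W d z = (\<Sum>t<sm d. ?b ((g ^^ Suc t) z))"
    unfolding W_def
    by (rule sum.reindex_bij_witness[where i = "\<lambda>t. t + 1" and j = "\<lambda>t. t - 1"]) auto
  have "W d (h z) - W d z = ?b z - ?b ((g ^^ sm d) z)"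
    unfolding A B using sum_lessThan_telescope'[of "\<lambda>t. ?b ((g ^^ t) z)" "sm d"]
    by (simp add: sum_subtractf)
  then show ?thesis unfolding trm_def by simp
qed

lemma stage_exists:
  assumes Fc: "continuous_on cantor_set F" and F0: "F x = 0"
  shows "\<exists>d. ok k M F d"
proof -
  define D where "D = Dk k"
  define \<epsilon> where "\<epsilon> = ek k"
  have D0: "D \<ge> 0" and e0: "\<epsilon> > 0" unfolding D_def \<epsilon>_def by (simp_all add: Dk_nonneg ek_pos)
  obtain \<eta> where \<eta>0: "\<eta> > 0" and \<eta>1: "\<forall>z\<in>cantor_set. dist z x < \<eta> \<longrightarrow> dist (F z) (F x) < \<epsilon>"
    using Fc xC e0 unfolding continuous_on_iff by blast
  have \<eta>: "\<eta> > 0" "\<And>z. z \<in> cantor_set \<Longrightarrow> dist z x < \<eta> \<Longrightarrow> \<bar>F z\<bar> < \<epsilon>"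
    using \<eta>0 \<eta>1 F0 by (auto simp: dist_real_def)
  define r where "r = nat \<lceil>D * 2 ^ k\<rceil> + 1"
  define c where "c = D / real r"
  have r1: "r \<ge> 1" unfolding r_def by simp
  obtain m where m: "m > M + r" "dist (xs m) x < min \<epsilon> \<eta>"
    using returns[of "min \<epsilon> \<eta>" "M + r"] e0 \<eta>(1) by auto
  define Q where "Q = xs ` {..<m} \<union> bs ` {1..m}"
  define P where "P = xs ` {M<..M+r}"
  obtain \<delta> where \<delta>: "\<delta> > 0" "\<forall>q\<in>Q. \<forall>q'\<in>Q. q \<noteq> q' \<longrightarrow> \<delta> \<le> dist q q'"
    using finite_sep[of Q] unfolding Q_def by auto
  define d where "d = Stage c P \<delta> m"
  have PQ: "P \<subseteq> Q" unfolding P_def Q_def using m by auto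
  have Pne: "P \<noteq> {}" unfolding P_def using r1 by auto
  have bin: "p \<in> P \<Longrightarrow> beta P \<delta> p = 1" for p using beta_in \<delta> by blast
  have bout: "q \<in> Q \<Longrightarrow> q \<notin> P \<Longrightarrow> beta P \<delta> q = 0" for q
  proof -
    assume q: "q \<in> Q" "q \<notin> P"
    have "\<delta> \<le> dist q p" if "p \<in> P" for p
    proof -
      have "p \<in> Q" "q \<noteq> p" using that PQ q by auto
      then show ?thesis using \<delta>(2) q(1) by blast
    qed
    then show ?thesis by (rule beta_out[OF Pne \<delta>(1)])
  qed
  have xsP: "xs i \<in> P \<longleftrightarrow> i \<in> {M<..M+r}" for i
    unfolding P_def using inj_xs by (auto simp: inj_eq)
  have bsP: "t \<ge> 1 \<Longrightarrow> bs t \<notin> P" for t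
    unfolding P_def using bs_ne_xs by auto
  have Wx: "W d x = 0"
  proof -
    have "W d x = (\<Sum>t\<in>{1..m}. beta P \<delta> ((g ^^ t) x))" by (simp add: W_def d_def)
    also have "\<dots> = 0"
    proof (intro sum.neutral ballI)
      fix t assume t: "t \<in> {1..m}"
      have "(g ^^ t) x = bs t" by (simp add: bs_def)
      moreover have "bs t \<in> Q" using t unfolding Q_def by auto
      ultimately show "beta P \<delta> ((g ^^ t) x) = 0" using bout bsP t by auto
    qed
    finally show ?thesis .
  qed
  have Wi: "W d (xs i) = 0" if i: "i \<le> M" for i
  proof -
    have "W d (xs i) = (\<Sum>t\<in>{1..m}. beta P \<delta> ((g ^^ t) (xs i)))" by (simp add: W_def d_def)
    also have "\<dots> = 0"
    proof (intro sum.neutral ballI)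
    fix t assume t: "t \<in> {1..m}"
    show "beta P \<delta> ((g ^^ t) (xs i)) = 0"
    proof (cases "t \<le> i")
      case True
      then have "(g ^^ t) (xs i) = xs (i - t)" by (simp add: gpow_xs)
      moreover have "xs (i - t) \<in> Q" unfolding Q_def using i m by auto
      moreover have "xs (i - t) \<notin> P" using xsP i by auto
      ultimately show ?thesis using bout by simp
    next
      case False
      then have "(g ^^ t) (xs i) = bs (t - i)" by (simp add: gpow_xs)
      moreover have "t - i \<in> {1..m}" using False t by auto
      then have "bs (t - i) \<in> Q" unfolding Q_def by blast
      moreover have "bs (t - i) \<notin> P" using bsP False by simp
      ultimately show ?thesis using bout by simp
    qed
    qed
    finally show ?thesis .
  qed
  have Wm: "W d (xs m) = real r"
  proof -
    have "W d (xs m) = (\<Sum>t\<in>{1..m}. beta P \<delta> (xs (m - t)))"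
      unfolding W_def d_def by (simp add: gpow_xs)
    also have "\<dots> = (\<Sum>i<m. beta P \<delta> (xs i))"
      by (rule sum.reindex_bij_witness[where i = "\<lambda>i. m - i" and j = "\<lambda>t. m - t"]) auto
    also have "\<dots> = (\<Sum>i<m. if i \<in> {M<..M+r} then 1 else 0)"
    proof (intro sum.cong refl)
      fix i assume "i \<in> {..<m}"
      then have "xs i \<in> Q" unfolding Q_def by auto
      then show "beta P \<delta> (xs i) = (if i \<in> {M<..M+r} then 1 else 0)"
        using bin bout xsP by auto
    qed
    also have "\<dots> = (\<Sum>i\<in>{..<m} \<inter> {M<..M+r}. (1::real))"
      by (subst sum.inter_restrict) auto
    also have "\<dots> = real (card ({..<m} \<inter> {M<..M+r}))" by simp
    also have "{..<m} \<inter> {M<..M+r} = {M<..M+r}" using m by auto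
    finally show ?thesis by simp
  qed
  have "ok k M F d"
    unfolding ok_def
  proof (intro conjI)
    show "0 \<le> sc d" unfolding d_def c_def using D0 by simp
    have "D * 2 ^ k \<le> real r" unfolding r_def by linarith
    then have "D \<le> real r * (1/2)^k" by (simp add: field_simps power_one_over)
    then show "sc d \<le> (1/2)^k" unfolding d_def c_def using r1 by (simp add: divide_le_eq mult.commute)
    show "0 < sd d" unfolding d_def using \<delta> by simp
    show "M < sm d" unfolding d_def using m by simp
    show "dist (xs (sm d)) x < ek k" unfolding d_def using m \<epsilon>_def by simp
    show "\<bar>F (xs (sm d))\<bar> < ek k" unfolding d_def using m \<eta>(2)[OF xs_C] \<epsilon>_def by simp
    show "sc d * W d (xs (sm d)) = Dk k" using Wm r1 unfolding d_def c_def D_def by simp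
    show "W d x = 0" by (rule Wx)
    show "\<forall>i\<le>M. W d (xs i) = 0" using Wi by blast
  qed
  then show ?thesis by blast
qed


primrec st :: "nat \<Rightarrow> nat \<times> (real \<Rightarrow> real)" where
  "st 0 = (0, \<lambda>z. 0)"
| "st (Suc k) = (let d = (SOME d. ok k (fst (st k)) (snd (st k)) d) in
      (sm d, \<lambda>z. snd (st k) z + sc d * W d z))"

declare st.simps(2)[simp del]

definition dat :: "nat \<Rightarrow> stage" where
  "dat k = (SOME d. ok k (fst (st k)) (snd (st k)) d)"

lemma st_Suc: "st (Suc k) = (sm (dat k), \<lambda>z. snd (st k) z + sc (dat k) * W (dat k) z)"
  by (simp add: dat_def Let_def st.simps(2))

lemma Finv: "continuous_on cantor_set (snd (st k)) \<and> snd (st k) x = 0"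
proof (induction k)
  case 0 then show ?case by (simp add: continuous_on_const)
next
  case (Suc k)
  have ex: "\<exists>d. ok k (fst (st k)) (snd (st k)) d"
    using stage_exists[OF conjunct1[OF Suc.IH] conjunct2[OF Suc.IH]] .
  have "ok k (fst (st k)) (snd (st k)) (dat k)"
    unfolding dat_def by (rule someI_ex[OF ex])
  then have "W (dat k) x = 0" unfolding ok_def by blast
  moreover have "continuous_on cantor_set (\<lambda>z. snd (st k) z + sc (dat k) * W (dat k) z)"
    using Suc cont_W by (intro continuous_intros) auto
  ultimately show ?case using Suc unfolding st_Suc by simp
qed

lemma dat_ok: "ok k (fst (st k)) (snd (st k)) (dat k)"
  unfolding dat_def
  by (rule someI_ex[OF stage_exists[OF conjunct1[OF Finv[of k]] conjunct2[OF Finv[of k]]]])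

lemma F_eq: "snd (st k) z = (\<Sum>j<k. sc (dat j) * W (dat j) z)"
  by (induction k) (simp_all add: st_Suc)

lemma mk_mono: "k < k' \<Longrightarrow> sm (dat k) \<le> fst (st k')"
proof (induction k')
  case 0 then show ?case by simp
next
  case (Suc j)
  show ?case
  proof (cases "k = j")
    case True then show ?thesis by (simp add: st_Suc)
  next
    case False
    then have "sm (dat k) \<le> fst (st j)" using Suc by simp
    also have "\<dots> < sm (dat j)" using dat_ok[of j] unfolding ok_def by blast
    finally show ?thesis by (simp add: st_Suc)
  qed
qed

lemma later_zero: "k < k' \<Longrightarrow> W (dat k') (xs (sm (dat k))) = 0"
  using dat_ok[of k'] mk_mono[of k k'] unfolding ok_def by blast

lemma sc_nonneg: "0 \<le> sc (dat k)" using dat_ok[of k] unfolding ok_def by blast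
lemma sc_le: "sc (dat k) \<le> (1/2)^k" using dat_ok[of k] unfolding ok_def by blast
lemma sd_pos: "0 < sd (dat k)" using dat_ok[of k] unfolding ok_def by blast

definition f :: "real \<Rightarrow> real" where
  "f z = (\<Sum>k. trm (dat k) z)"

lemma trm_le: "norm (trm (dat k) z) \<le> (1/2)^k"
  using trm_bound[OF sc_nonneg sd_pos, of k z] sc_le[of k] by simp

lemma summable_trm: "summable (\<lambda>k. trm (dat k) z)"
  by (rule summable_comparison_test[OF _ summable_geometric[of "1/2::real"]])
     (use trm_le in auto)

lemma cont_f: "continuous_on cantor_set f"
proof -
  have "uniform_limit cantor_set (\<lambda>n z. \<Sum>i<n. trm (dat i) z) (\<lambda>z. \<Sum>i. trm (dat i) z) sequentially"
    by (rule Weierstrass_m_test[OF _ summable_geometric[of "1/2::real"]]) (use trm_le in auto)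
  moreover have "\<forall>\<^sub>F n in sequentially. continuous_on cantor_set (\<lambda>z. \<Sum>i<n. trm (dat i) z)"
    using cont_trm by (intro always_eventually allI continuous_on_sum) auto
  ultimately have "continuous_on cantor_set (\<lambda>z. \<Sum>i. trm (dat i) z)"
    by (intro uniform_limit_theorem) auto
  then show ?thesis unfolding f_def[abs_def] .
qed

definition S :: "nat \<Rightarrow> real" where
  "S n = (\<Sum>j<n. f (xs j))"

lemma S_eq: "S n = (\<Sum>k. sc (dat k) * W (dat k) (xs n))"
  and S_summable: "summable (\<lambda>k. sc (dat k) * W (dat k) (xs n))"
proof -
  have tel: "(\<Sum>j<n. trm (dat k) (xs j)) = sc (dat k) * W (dat k) (xs n)" for k
  proof -
    have "(\<Sum>j<n. trm (dat k) (xs j)) = (\<Sum>j<n. sc (dat k) * (W (dat k) (xs (Suc j)) - W (dat k) (xs j)))"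
      by (intro sum.cong refl) (simp add: trm_eq xs_C xs_Suc)
    also have "\<dots> = sc (dat k) * (\<Sum>j<n. W (dat k) (xs (Suc j)) - W (dat k) (xs j))"
      by (simp add: sum_distrib_left)
    also have "\<dots> = sc (dat k) * (W (dat k) (xs n) - W (dat k) (xs 0))"
      using sum_lessThan_telescope[of "\<lambda>j. W (dat k) (xs j)" n] by simp
    also have "W (dat k) (xs 0) = 0" using dat_ok[of k] unfolding ok_def xs_0 by blast
    finally show ?thesis by simp
  qed
  have "S n = (\<Sum>k. \<Sum>j<n. trm (dat k) (xs j))"
    unfolding S_def f_def by (rule suminf_sum[symmetric]) (rule summable_trm)
  then show "S n = (\<Sum>k. sc (dat k) * W (dat k) (xs n))" by (simp add: tel)
  have "summable (\<lambda>k. \<Sum>j<n. trm (dat k) (xs j))" by (intro summable_sum summable_trm)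
  then show "summable (\<lambda>k. sc (dat k) * W (dat k) (xs n))" by (simp add: tel)
qed

lemma S_nonneg: "S n \<ge> 0"
  unfolding S_eq by (intro suminf_nonneg S_summable mult_nonneg_nonneg sc_nonneg W_nonneg)

lemma S_at: "S (sm (dat k)) = snd (st k) (xs (sm (dat k))) + Dk k"
proof -
  let ?m = "sm (dat k)"
  have "S ?m = (\<Sum>j\<in>{..k}. sc (dat j) * W (dat j) (xs ?m))"
    unfolding S_eq by (rule suminf_finite) (auto simp: later_zero)
  also have "\<dots> = (\<Sum>j<k. sc (dat j) * W (dat j) (xs ?m)) + sc (dat k) * W (dat k) (xs ?m)"
    by (simp add: lessThan_Suc_atMost[symmetric])
  also have "sc (dat k) * W (dat k) (xs ?m) = Dk k" using dat_ok[of k] unfolding ok_def by blast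
  finally show ?thesis by (simp add: F_eq)
qed

lemma R1:
  assumes "D \<ge> 0" "\<epsilon> > 0"
  shows "\<exists>m>0. dist (xs m) x < \<epsilon> \<and> \<bar>S m - D\<bar> < \<epsilon>"
proof -
  obtain j :: nat where j: "1 / real (Suc j) < \<epsilon> / 2"
  proof -
    obtain j :: nat where "2 / \<epsilon> < real j" using reals_Archimedean2 by blast
    then have "1 / real (Suc j) < \<epsilon> / 2" using assms(2)
      by (simp add: field_simps)
    then show ?thesis using that by blast
  qed
  define i where "i = nat \<lfloor>D * real (Suc j)\<rfloor>"
  define k where "k = prod_encode (i, j)"
  have pk: "prod_decode k = (i, j)" unfolding k_def by simp
  have Dk: "Dk k = real i / real (Suc j)" and ek: "ek k = 1 / real (Suc j)"
    unfolding Dk_def ek_def pk by simp_all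
  have nn: "0 \<le> D * real (Suc j)" using assms by simp
  then have ri: "real i = of_int \<lfloor>D * real (Suc j)\<rfloor>" unfolding i_def by simp
  have "real i \<le> D * real (Suc j)" "D * real (Suc j) < real i + 1"
    unfolding ri by (simp_all add: of_int_floor_le real_of_int_floor_add_one_gt)
  then have a1: "\<bar>real i - D * real (Suc j)\<bar> \<le> 1" by linarith
  have "Dk k - D = (real i - D * real (Suc j)) / real (Suc j)"
    unfolding Dk by (simp add: field_simps)
  then have "\<bar>Dk k - D\<bar> = \<bar>real i - D * real (Suc j)\<bar> / real (Suc j)"
    by simp
  then have Dclose: "\<bar>Dk k - D\<bar> \<le> 1 / real (Suc j)"
    using a1 by (simp add: divide_right_mono)
  let ?m = "sm (dat k)"
  have ok: "ok k (fst (st k)) (snd (st k)) (dat k)" by (rule dat_ok)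
  have m0: "?m > 0" using ok unfolding ok_def by auto
  have d1: "dist (xs ?m) x < 1 / real (Suc j)" using ok unfolding ok_def ek by blast
  have d2: "\<bar>snd (st k) (xs ?m)\<bar> < 1 / real (Suc j)" using ok unfolding ok_def ek by blast
  have "\<bar>S ?m - D\<bar> \<le> \<bar>snd (st k) (xs ?m)\<bar> + \<bar>Dk k - D\<bar>" unfolding S_at by linarith
  then have "\<bar>S ?m - D\<bar> < \<epsilon>" using d2 Dclose j by linarith
  moreover have "dist (xs ?m) x < \<epsilon>" using d1 j assms(2) by linarith
  ultimately show ?thesis using m0 by blast
qed


definition T :: "real \<times> real \<Rightarrow> real \<times> real" where
  "T p = (h (fst p), exp (- f (fst p)) * snd p)"
definition Ti :: "real \<times> real \<Rightarrow> real \<times> real" where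
  "Ti p = (g (fst p), exp (f (g (fst p))) * snd p)"

abbreviation CC :: "(real \<times> real) set" where "CC \<equiv> cantor_set \<times> UNIV"

definition Orb :: "(real \<times> real) set" where
  "Orb = range (\<lambda>n. (xs n, exp (- S n)))"

lemma S_Suc: "S (Suc n) = S n + f (xs n)"
  unfolding S_def by simp

lemma Tpow: "(T ^^ n) (x, lam) = (xs n, lam * exp (- S n))"
proof (induction n)
  case 0 then show ?case by (simp add: xs_0 S_def)
next
  case (Suc n)
  then show ?case
    by (simp add: T_def xs_Suc S_Suc exp_add[symmetric] algebra_simps)
qed

lemma T_CC: "p \<in> CC \<Longrightarrow> T p \<in> CC"
  unfolding T_def by (auto intro: hC)
lemma Ti_CC: "p \<in> CC \<Longrightarrow> Ti p \<in> CC"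
  unfolding Ti_def by (auto intro: gC)
lemma Ti_T: "p \<in> CC \<Longrightarrow> Ti (T p) = p"
  unfolding T_def Ti_def by (cases p) (auto simp: g_h exp_minus field_simps)
lemma T_Ti: "p \<in> CC \<Longrightarrow> T (Ti p) = p"
  unfolding T_def Ti_def by (cases p) (auto simp: h_g gC exp_minus field_simps)

lemma cont_T: "continuous_on CC T"
proof -
  have "continuous_on CC (\<lambda>p. h (fst p))"
    by (rule continuous_on_compose2[OF cont_h continuous_on_fst]) auto
  moreover have "continuous_on CC (\<lambda>p. f (fst p))"
    by (rule continuous_on_compose2[OF cont_f continuous_on_fst]) auto
  ultimately show ?thesis unfolding T_def
    by (intro continuous_intros) auto
qed

lemma cont_Ti: "continuous_on CC Ti"
proof -
  have g1: "continuous_on CC (\<lambda>p. g (fst p))"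
    by (rule continuous_on_compose2[OF cont_g continuous_on_fst]) auto
  have "continuous_on CC (\<lambda>p. f (g (fst p)))"
    by (rule continuous_on_compose2[OF cont_f g1]) (auto intro: gC)
  with g1 show ?thesis unfolding Ti_def
    by (intro continuous_intros) auto
qed

lemma closure_map:
  fixes \<Phi> :: "real \<times> real \<Rightarrow> real \<times> real"
  assumes "continuous_on CC \<Phi>" "A \<subseteq> CC" "p \<in> closure A" "p \<in> CC"
  shows "\<Phi> p \<in> closure (\<Phi> ` A)"
proof -
  obtain a where a: "\<And>n. a n \<in> A" "a \<longlonglongrightarrow> p"
    using assms(3) unfolding closure_sequential by blast
  have ev: "\<forall>\<^sub>F n in sequentially. a n \<in> CC" using a(1) assms(2) by (simp add: subsetD)
  have lim: "(\<lambda>n. \<Phi> (a n)) \<longlonglongrightarrow> \<Phi> p"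
    by (rule continuous_on_tendsto_compose[OF assms(1) a(2) assms(4) ev])
  have "\<forall>n. \<Phi> (a n) \<in> \<Phi> ` A" using a(1) by blast
  with lim show ?thesis unfolding closure_sequential by (intro exI[of _ "\<lambda>n. \<Phi> (a n)"]) simp
qed

lemma Orb_CC: "Orb \<subseteq> CC" unfolding Orb_def using xs_C by auto
lemma Orb_01: "Orb \<subseteq> UNIV \<times> {0..1}"
  unfolding Orb_def using S_nonneg by auto
lemma xO: "(x, 1) \<in> Orb" unfolding Orb_def
  by (rule range_eqI[of _ _ 0]) (simp add: xs_0 S_def)
lemma T_step: "T (xs n, exp (- S n)) = (xs (Suc n), exp (- S (Suc n)))"
  using Tpow[of "Suc n" 1] Tpow[of n 1] by simp

lemma TO: "T ` Orb \<subseteq> Orb"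
proof
  fix q assume "q \<in> T ` Orb"
  then obtain n where "q = T (xs n, exp (- S n))" unfolding Orb_def by blast
  then have "q = (xs (Suc n), exp (- S (Suc n)))" by (simp add: T_step)
  then show "q \<in> Orb" unfolding Orb_def by blast
qed
lemma Orb_insert: "Orb = insert (x, 1) (T ` Orb)"
proof
  show "insert (x, 1) (T ` Orb) \<subseteq> Orb" using xO TO by auto
  show "Orb \<subseteq> insert (x, 1) (T ` Orb)"
  proof
    fix q assume "q \<in> Orb"
    then obtain n where q: "q = (xs n, exp (- S n))" unfolding Orb_def by blast
    show "q \<in> insert (x, 1) (T ` Orb)"
    proof (cases n)
      case 0 then show ?thesis using q by (simp add: xs_0 S_def)
    next
      case (Suc k)
      have "q = T (xs k, exp (- S k))"
        using q Suc T_step by simp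
      moreover have "(xs k, exp (- S k)) \<in> Orb" unfolding Orb_def by blast
      ultimately show ?thesis by blast
    qed
  qed
qed

lemma K0_01: "closure Orb \<subseteq> UNIV \<times> {0..1}"
  by (rule closure_minimal[OF Orb_01]) (simp add: closed_Times)

lemma approach:
  assumes lam: "0 \<le> lam" "lam \<le> 1"
  shows "(x, lam) \<in> closure (T ` Orb)"
  unfolding closure_approachable
proof (intro allI impI)
  fix e :: real assume e: "e > 0"
  define e' where "e' = min e 1"
  have e': "0 < e'" "e' \<le> 1" "e' \<le> e" unfolding e'_def using e by auto
  define \<mu> where "\<mu> = max lam (e' / 8)"
  have mu: "0 < \<mu>" "\<mu> \<le> 1" "\<mu> - lam \<le> e' / 8" "lam \<le> \<mu>"
    unfolding \<mu>_def using e' lam by auto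
  define D where "D = - ln \<mu>"
  have D0: "D \<ge> 0" unfolding D_def using mu by simp
  have eD: "exp (- D) = \<mu>" unfolding D_def using mu by simp
  obtain m where m: "m > 0" "dist (xs m) x < e' / 4" "\<bar>S m - D\<bar> < e' / 4"
    using R1[OF D0, of "e' / 4"] e' by auto
  have "\<bar>exp (- S m) - exp (- D)\<bar> \<le> \<bar>S m - D\<bar>" by (rule exp_lip[OF S_nonneg D0])
  then have "dist (exp (- S m)) lam < e' / 2"
    using m(3) mu eD unfolding dist_real_def by linarith
  then have "dist (xs m, exp (- S m)) (x, lam) < e"
    using dist_pair_le[of "xs m" "exp (- S m)" x lam] m(2) e' by linarith
  moreover have "(xs m, exp (- S m)) \<in> T ` Orb"
  proof -
    obtain k where k: "m = Suc k" using m(1) gr0_implies_Suc by blast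
    have "(xs m, exp (- S m)) = T (xs k, exp (- S k))"
      using k T_step by simp
    moreover have "(xs k, exp (- S k)) \<in> Orb" unfolding Orb_def by blast
    ultimately show ?thesis by blast
  qed
  ultimately show "\<exists>y\<in>T ` Orb. dist y (x, lam) < e" by blast
qed

definition K :: "(real \<times> real) set" where "K = closure Orb \<inter> CC"

lemma TK: "T ` K \<subseteq> K"
proof
  fix q assume "q \<in> T ` K"
  then obtain p where p: "p \<in> K" "q = T p" by blast
  have "T p \<in> closure (T ` Orb)"
    by (rule closure_map[OF cont_T Orb_CC]) (use p K_def in auto)
  also have "\<dots> \<subseteq> closure Orb" using TO closure_mono by blast
  finally show "q \<in> K" using p T_CC unfolding K_def by auto
qed

lemma KT: "K \<subseteq> T ` K"
proof
  fix q assume q: "q \<in> K"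
  have "closure Orb = insert (x, 1) (closure (T ` Orb))"
    by (subst Orb_insert) (rule closure_insert)
  then have qc: "q \<in> closure (T ` Orb)" using q approach[of 1] unfolding K_def by auto
  have TOCC: "T ` Orb \<subseteq> CC" using Orb_CC T_CC by blast
  have "Ti q \<in> closure (Ti ` T ` Orb)"
    by (rule closure_map[OF cont_Ti TOCC qc]) (use q K_def in auto)
  also have "Ti ` T ` Orb = Orb"
  proof -
    have "\<And>p. p \<in> Orb \<Longrightarrow> Ti (T p) = p" using Orb_CC Ti_T by blast
    then have "(\<lambda>p. Ti (T p)) ` Orb = (\<lambda>p. p) ` Orb" by (rule image_cong[OF refl])
    then show ?thesis by (simp add: image_image)
  qed
  finally have "Ti q \<in> K" using q Ti_CC unfolding K_def by auto
  moreover have "q = T (Ti q)" using q T_Ti unfolding K_def by auto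
  ultimately show "q \<in> T ` K" by blast
qed

lemma TK_eq: "T ` K = K" using TK KT by blast

lemma Tpow_K: "p \<in> K \<Longrightarrow> (T ^^ n) p \<in> K"
  by (induction n) (use TK in auto)

lemma xlam_K: "0 \<le> lam \<Longrightarrow> lam \<le> 1 \<Longrightarrow> (x, lam) \<in> K"
  using approach[of lam] closure_mono[OF TO] xC unfolding K_def by auto

lemma down:
  assumes zt: "(z, t) \<in> K" and s: "0 \<le> s" "s \<le> t"
  shows "(z, s) \<in> K"
proof (cases "t = 0")
  case True then show ?thesis using zt s by simp
next
  case False
  define lam where "lam = s / t"
  have t0: "t > 0" using False s by simp
  have lam: "0 \<le> lam" "lam \<le> 1" unfolding lam_def using s t0 by auto
  define \<sigma> where "\<sigma> = (\<lambda>p::real \<times> real. (fst p, lam * snd p))"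
  have "\<sigma> ` Orb \<subseteq> closure Orb"
  proof
    fix q assume "q \<in> \<sigma> ` Orb"
    then obtain p where p: "p \<in> Orb" "q = \<sigma> p" by blast
    then obtain n where "p = (xs n, exp (- S n))" unfolding Orb_def by blast
    then have q: "q = (xs n, lam * exp (- S n))" using p unfolding \<sigma>_def by simp
    have "(T ^^ n) (x, lam) \<in> K" by (rule Tpow_K[OF xlam_K[OF lam]])
    then show "q \<in> closure Orb" using q Tpow[of n lam] unfolding K_def by simp
  qed
  moreover have "continuous_on (closure Orb) \<sigma>" unfolding \<sigma>_def by (intro continuous_intros)
  ultimately have "\<sigma> ` closure Orb \<subseteq> closure Orb"
    using image_closure_subset[of Orb \<sigma> "closure Orb"] by simp
  moreover have "(z, t) \<in> closure Orb" using zt unfolding K_def by simp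
  ultimately have "\<sigma> (z, t) \<in> closure Orb" by blast
  moreover have "\<sigma> (z, t) = (z, s)" unfolding \<sigma>_def lam_def using t0 by simp
  ultimately show ?thesis using zt unfolding K_def by auto
qed

lemma zero_K: "z \<in> cantor_set \<Longrightarrow> (z, 0) \<in> closure Orb"
proof -
  assume z: "z \<in> cantor_set"
  define \<iota> where "\<iota> = (\<lambda>y::real. (y, 0::real))"
  have "\<iota> ` range xs \<subseteq> closure Orb"
  proof
    fix q assume "q \<in> \<iota> ` range xs"
    then obtain n where q: "q = (xs n, 0)" unfolding \<iota>_def by auto
    have "(xs n, exp (- S n)) \<in> Orb" unfolding Orb_def by blast
    then have "(xs n, exp (- S n)) \<in> K" unfolding K_def using xs_C closure_subset by auto
    then have "(xs n, 0) \<in> K" by (rule down) (simp_all add: S_nonneg)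
    then show "q \<in> closure Orb" using q unfolding K_def by simp
  qed
  moreover have "continuous_on (closure (range xs)) \<iota>" unfolding \<iota>_def by (intro continuous_intros)
  ultimately have "\<iota> ` closure (range xs) \<subseteq> closure Orb"
    using image_closure_subset[of "range xs" \<iota> "closure Orb"] by simp
  moreover have "z \<in> closure (range xs)" using z dense orbit_eq by auto
  ultimately show ?thesis unfolding \<iota>_def by auto
qed

definition phiU :: "real \<Rightarrow> real" where
  "phiU z = Sup {t. (z, t) \<in> closure Orb}"

lemma fiber:
  assumes z: "z \<in> cantor_set"
  shows "(z, phiU z) \<in> closure Orb" "\<And>t. (z, t) \<in> closure Orb \<Longrightarrow> t \<le> phiU z"
    "0 \<le> phiU z" "phiU z \<le> 1"
proof -
  let ?F = "{t. (z, t) \<in> closure Orb}"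
  have ne: "0 \<in> ?F" using zero_K[OF z] by simp
  have bdd: "bdd_above ?F" using K0_01 by (auto intro!: bdd_aboveI[of _ 1])
  have cl: "closed ?F"
  proof -
    have "?F = (\<lambda>t. (z, t)) -` closure Orb" by auto
    moreover have "closed ((\<lambda>t. (z, t)) -` closure Orb)"
      by (rule continuous_closed_vimage) (auto intro: continuous_intros)
    ultimately show ?thesis by simp
  qed
  have "Sup ?F \<in> ?F" by (rule closed_contains_Sup[OF _ bdd cl]) (use ne in auto)
  then show "(z, phiU z) \<in> closure Orb" unfolding phiU_def by simp
  show up: "\<And>t. (z, t) \<in> closure Orb \<Longrightarrow> t \<le> phiU z"
    unfolding phiU_def using bdd by (auto intro: cSup_upper)
  show "0 \<le> phiU z" using up ne by simp
  show "phiU z \<le> 1" using \<open>(z, phiU z) \<in> closure Orb\<close> K0_01 by auto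
qed

lemma fence_eq: "fence (\<lambda>_. 0) phiU = K"
proof
  show "fence (\<lambda>_. 0) phiU \<subseteq> K"
  proof
    fix p assume "p \<in> fence (\<lambda>_. 0) phiU"
    then obtain z t where p: "p = (z, t)" "z \<in> cantor_set" "0 \<le> t" "t \<le> phiU z"
      unfolding fence_def by auto
    have "(z, phiU z) \<in> K" using fiber(1)[OF p(2)] p(2) unfolding K_def by auto
    then show "p \<in> K" using down p by blast
  qed
  show "K \<subseteq> fence (\<lambda>_. 0) phiU"
  proof
    fix p assume pK: "p \<in> K"
    then obtain z t where p: "p = (z, t)" "z \<in> cantor_set" "(z, t) \<in> closure Orb"
      unfolding K_def by auto
    have "t \<in> {0..1}" using p(3) K0_01 by auto
    then show "p \<in> fence (\<lambda>_. 0) phiU"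
      unfolding fence_def using p fiber(2)[OF p(2) p(3)] by auto
  qed
qed

lemma usc_phiU: "usc_on cantor_set phiU"
  unfolding usc_on_def
proof
  fix a
  define B where "B = fst ` (closure Orb \<inter> (UNIV \<times> {a..}))"
  have "bounded Orb"
  proof (rule bounded_subset)
    show "bounded ({0..3::real} \<times> {0..1::real})" by (intro bounded_Times) auto
    show "Orb \<subseteq> {0..3} \<times> {0..1}" using Orb_CC Orb_01 cantor_bounded by auto
  qed
  then have "compact (closure Orb \<inter> (UNIV \<times> {a..}))"
    by (intro compact_Int_closed) (auto intro: closed_Times)
  then have "compact B" unfolding B_def
    by (intro compact_continuous_image continuous_intros)
  then have cB: "closed B" by (rule compact_imp_closed)
  have "{z \<in> cantor_set. phiU z < a} = cantor_set \<inter> (- B)"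
  proof (intro set_eqI iffI)
    fix z assume "z \<in> {z \<in> cantor_set. phiU z < a}"
    then have z: "z \<in> cantor_set" "phiU z < a" by auto
    have "z \<notin> B"
    proof
      assume "z \<in> B"
      then obtain t where "(z, t) \<in> closure Orb" "a \<le> t" unfolding B_def by auto
      then show False using fiber(2)[OF z(1), of t] z(2) by linarith
    qed
    then show "z \<in> cantor_set \<inter> - B" using z by simp
  next
    fix z assume z: "z \<in> cantor_set \<inter> - B"
    have "\<not> a \<le> phiU z"
    proof
      assume "a \<le> phiU z"
      then have "(z, phiU z) \<in> closure Orb \<inter> (UNIV \<times> {a..})" using fiber(1)[of z] z by auto
      then have "fst (z, phiU z) \<in> B" unfolding B_def by (rule imageI)
      then have "z \<in> B" by simp
      then show False using z by simp
    qed
    then show "z \<in> {z \<in> cantor_set. phiU z < a}" using z by auto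
  qed
  then show "openin (top_of_set cantor_set) {z \<in> cantor_set. phiU z < a}"
    using cB by (simp add: openin_open_Int open_Compl)
qed

lemma phiU_h: "z \<in> cantor_set \<Longrightarrow> phiU (h z) = exp (- f z) * phiU z"
proof -
  assume z: "z \<in> cantor_set"
  have zK: "(z, phiU z) \<in> K" unfolding K_def using fiber(1)[OF z] z by simp
  then have "T (z, phiU z) \<in> K" by (rule subsetD[OF TK, OF imageI])
  then have "(h z, exp (- f z) * phiU z) \<in> closure Orb" unfolding T_def K_def by simp
  then have le1: "exp (- f z) * phiU z \<le> phiU (h z)" by (rule fiber(2)[OF hC[OF z]])
  have hzC: "h z \<in> cantor_set" by (rule hC[OF z])
  have "(h z, phiU (h z)) \<in> K" unfolding K_def using fiber(1)[OF hzC] hzC by simp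
  then have "(h z, phiU (h z)) \<in> T ` K" by (rule subsetD[OF KT])
  then obtain p where p: "p \<in> K" "T p = (h z, phiU (h z))" by (auto elim!: imageE)
  obtain z' t' where p': "p = (z', t')" by (cases p)
  have pK: "(z', t') \<in> closure Orb" "z' \<in> cantor_set" using p(1) unfolding p' K_def by simp_all
  have e1: "h z' = h z" and e2: "exp (- f z') * t' = phiU (h z)"
    using p(2) unfolding p' T_def by simp_all
  have "z' = g (h z')" using g_h[OF pK(2)] by simp
  also have "\<dots> = g (h z)" using e1 by simp
  also have "\<dots> = z" using g_h[OF z] by simp
  finally have zz: "z' = z" .
  have "t' \<le> phiU z" using fiber(2)[OF z] pK(1) unfolding zz by blast
  then have "exp (- f z) * t' \<le> exp (- f z) * phiU z" by (simp add: mult_left_mono)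
  then have "phiU (h z) \<le> exp (- f z) * phiU z" using e2 unfolding zz by simp
  with le1 show ?thesis by simp
qed

lemma phiU_xs: "phiU (xs n) = exp (- S n)"
proof (induction n)
  case 0
  have "(x, 1) \<in> closure Orb" using xO closure_subset by blast
  then have "1 \<le> phiU x" using fiber(2)[OF xC] by blast
  then show ?case using fiber(4)[OF xC] by (simp add: xs_0 S_def)
next
  case (Suc n)
  then show ?case by (simp add: xs_Suc phiU_h xs_C S_Suc exp_add[symmetric] algebra_simps)
qed

lemma main:
  "\<exists>phiL phiU hh. admissible_pair phiL phiU \<and> lelek_fence phiL phiU \<and>
     (\<exists>gg. homeomorphism (fence phiL phiU) (fence phiL phiU) hh gg) \<and>
     (\<forall>p\<in>fence phiL phiU. fst (hh p) = h (fst p)) \<and>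
     fence phiL phiU \<subseteq> closure (orbit hh (x, phiU x))"
proof (rule exI[of _ "\<lambda>_. 0"], rule exI[of _ phiU], rule exI[of _ T], intro conjI)
  show "admissible_pair (\<lambda>_. 0) phiU"
    unfolding admissible_pair_def lsc_on_def
  proof (intro conjI)
    show "\<forall>z\<in>cantor_set. (0::real) \<in> {0..1} \<and> phiU z \<in> {0..1} \<and> 0 \<le> phiU z"
      using fiber(3,4) by auto
    show "\<forall>a. openin (top_of_set cantor_set) {z \<in> cantor_set. a < (0::real)}"
    proof
      fix a :: real
      show "openin (top_of_set cantor_set) {z \<in> cantor_set. a < 0}"
        by (cases "a < 0") auto
    qed
    show "usc_on cantor_set phiU" by (rule usc_phiU)
  qed
  show "lelek_fence (\<lambda>_. 0) phiU"
    unfolding lelek_fence_def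
  proof (intro conjI)
    show "\<forall>z\<in>cantor_set. (0::real) = 0" by simp
    show "\<exists>D\<subseteq>cantor_set. cantor_set \<subseteq> closure D \<and> (\<forall>z\<in>D. 0 < phiU z)"
    proof (intro exI[of _ "range xs"] conjI ballI)
      show "range xs \<subseteq> cantor_set" using xs_C by auto
      show "cantor_set \<subseteq> closure (range xs)" using dense orbit_eq by simp
      fix z assume "z \<in> range xs"
      then show "0 < phiU z" using phiU_xs by auto
    qed
    have "Orb \<subseteq> (\<lambda>z. (z, phiU z)) ` cantor_set"
      unfolding Orb_def using phiU_xs xs_C by auto
    then have "closure Orb \<subseteq> closure ((\<lambda>z. (z, phiU z)) ` cantor_set)" by (rule closure_mono)
    then show "fence (\<lambda>_. 0) phiU \<subseteq> closure ((\<lambda>z. (z, phiU z)) ` cantor_set)"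
      unfolding fence_eq K_def by blast
  qed
  have TiK: "Ti ` K = K"
  proof
    show "Ti ` K \<subseteq> K"
    proof
      fix q assume "q \<in> Ti ` K"
      then obtain p where p: "p \<in> K" "q = Ti p" by (auto elim!: imageE)
      have "p \<in> T ` K" by (rule subsetD[OF KT p(1)])
      then obtain r where r: "r \<in> K" "p = T r" by (auto elim!: imageE)
      have "r \<in> CC" using r(1) unfolding K_def by simp
      then have "q = r" using p(2) r(2) Ti_T by simp
      then show "q \<in> K" using r(1) by simp
    qed
    show "K \<subseteq> Ti ` K"
    proof
      fix p assume p: "p \<in> K"
      then have "T p \<in> K" by (rule subsetD[OF TK, OF imageI])
      moreover have "p = Ti (T p)" using p Ti_T unfolding K_def by simp
      ultimately show "p \<in> Ti ` K" by (rule rev_image_eqI)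
    qed
  qed
  have "homeomorphism K K T Ti"
    unfolding homeomorphism_def
  proof (intro conjI)
    show "continuous_on K T" by (rule continuous_on_subset[OF cont_T]) (auto simp: K_def)
    show "continuous_on K Ti" by (rule continuous_on_subset[OF cont_Ti]) (auto simp: K_def)
    show "T ` K = K" by (rule TK_eq)
    show "Ti ` K = K" by (rule TiK)
    show "\<forall>p\<in>K. Ti (T p) = p" using Ti_T unfolding K_def by simp
    show "\<forall>p\<in>K. T (Ti p) = p" using T_Ti unfolding K_def by simp
  qed
  then show "\<exists>gg. homeomorphism (fence (\<lambda>_. 0) phiU) (fence (\<lambda>_. 0) phiU) T gg"
    unfolding fence_eq by blast
  show "\<forall>p\<in>fence (\<lambda>_. 0) phiU. fst (T p) = h (fst p)" unfolding T_def by simp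
  have "orbit T (x, phiU x) = Orb"
    unfolding orbit_def Orb_def using phiU_xs[of 0] Tpow[of _ 1]
    by (simp add: xs_0 S_def)
  then show "fence (\<lambda>_. 0) phiU \<subseteq> closure (orbit T (x, phiU x))"
    unfolding fence_eq K_def by auto
qed

end


theorem theorem7p1:
  fixes h :: "real \<Rightarrow> real" and x :: real
  assumes "\<exists>g. homeomorphism cantor_set cantor_set h g"
    and "top_transitive cantor_set h"
    and "x \<in> cantor_set"
    and "cantor_set \<subseteq> closure (orbit h x)"
  shows "\<exists>phiL phiU hh. admissible_pair phiL phiU \<and> lelek_fence phiL phiU \<and>
           (\<exists>gg. homeomorphism (fence phiL phiU) (fence phiL phiU) hh gg) \<and>
           (\<forall>p\<in>fence phiL phiU. fst (hh p) = h (fst p)) \<and>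
           fence phiL phiU \<subseteq> closure (orbit hh (x, phiU x))"
proof -
  obtain g where g: "homeomorphism cantor_set cantor_set h g" using assms(1) by blast
  interpret s: sys h g x
    by (rule sys.intro[OF g assms(2) assms(3) assms(4)])
  show ?thesis by (rule s.main)
qed

end
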